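(* Let $\mathfrak{t},\mathfrak{w}$ be sesquilinear forms on $\mathbb{C}^n$ with $\mathfrak{w}\geq 0$. (i) The following statements are equivalent: (a) $\mathfrak{t}$ is $\mathfrak{w}$-left bounded; (b) $\mathfrak{t}$ is $\mathfrak{w}$-left regular; (c) $\ker(\mathfrak{w})\subseteq \ker(\mathfrak{t})$. (ii) $\mathfrak{t}$ is $\mathfrak{w}$-left strongly singular if and only if $\ker(\mathfrak{w})+\ker(\mathfrak{t})=\mathbb{C}^n$.
   Context: A sesquilinear form $\mathfrak{t}$ on a complex vector space $\mathcal{D}$ is linear in the first and anti-linear in the second component; $\mathfrak{t}[f]:=\mathfrak{t}(f,f)$, and $\mathfrak{t}\geq 0$ means $\mathfrak{t}[f]\geq 0$ for all $f$. $\ker(\mathfrak{t}):=\{f\in\mathcal{D}:\mathfrak{t}(f,g)=0\ \forall g\in\mathcal{D}\}$. For a non-negative form $\mathfrak{w}$, a non-negative form $\mathfrak{u}$ is $\mathfrak{w}$-absolutely continuous ($\mathfrak{u}\ll\mathfrak{w}$) if $\mathfrak{w}[f_n]\to 0$ and $\mathfrak{u}[f_n-f_m]\to 0$ imply $\mathfrak{u}[f_n]\to 0$; it is $\mathfrak{w}$-singular ($\mathfrak{u}\perp\mathfrak{w}$) if for every $f\in\mathcal{D}$ there is a sequence $\{f_n\}\subset\mathcal{D}$ with $\mathfrak{w}[f_n]\to 0$ and $\mathfrak{u}[f-f_n]\to 0$. $M_l(\mathfrak{t})$ denotes the set of non-negative forms $\mathfrak{s}_1$ on $\mathcal{D}$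 for which there is a non-negative form $\mathfrak{s}_2$ on $\mathcal{D}$ with $|\mathfrak{t}(f,g)|\leq \mathfrak{s}_1[f]^{1/2}\mathfrak{s}_2[g]^{1/2}$ for all $f,g\in\mathcal{D}$. $\mathfrak{t}$ is called $\mathfrak{w}$-left regular if some $\mathfrak{s}_1\in M_l(\mathfrak{t})$ satisfies $\mathfrak{s}_1\ll\mathfrak{w}$; $\mathfrak{w}$-left strongly singular if some $\mathfrak{s}_1\in M_l(\mathfrak{t})$ satisfies $\mathfrak{s}_1\perp\mathfrak{w}$; $\mathfrak{w}$-left bounded if $C\mathfrak{w}\in M_l(\mathfrak{t})$ for some $C>0$. Here $\mathcal{D}=\mathbb{C}^n$. *)

theory Defs
  imports "HOL-Analysis.Analysis"
begin

type_synonym 'n form = "complex ^ 'n \<Rightarrow> complex ^ 'n \<Rightarrow> complex"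

definition sesquilinear :: "'n::finite form \<Rightarrow> bool" where
  "sesquilinear t \<longleftrightarrow>
     (\<forall>f g h. t (f + g) h = t f h + t g h) \<and>
     (\<forall>a f h. t (a *s f) h = a * t f h) \<and>
     (\<forall>f g h. t f (g + h) = t f g + t f h) \<and>
     (\<forall>a f g. t f (a *s g) = cnj a * t f g)"

definition nonneg_form :: "'n::finite form \<Rightarrow> bool" where
  "nonneg_form t \<longleftrightarrow> (\<forall>f. t f f \<in> \<real> \<and> 0 \<le> Re (t f f))"

definition quad :: "'n::finite form \<Rightarrow> complex ^ 'n \<Rightarrow> real" where
  "quad t f = Re (t f f)"

definition form_ker :: "'n::finite form \<Rightarrow> (complex ^ 'n) set" where
  "form_ker t = {f. \<forall>g. t f g = 0}"

definition abs_continuous :: "'n::finite form \<Rightarrow> 'n form \<Rightarrow> bool" where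
  "abs_continuous u w \<longleftrightarrow>
     (\<forall>fs :: nat \<Rightarrow> complex ^ 'n.
        (\<lambda>k. quad w (fs k)) \<longlonglongrightarrow> 0 \<longrightarrow>
        (\<forall>e>0. \<exists>N. \<forall>m\<ge>N. \<forall>k\<ge>N. quad u (fs k - fs m) < e) \<longrightarrow>
        (\<lambda>k. quad u (fs k)) \<longlonglongrightarrow> 0)"

definition singular_form :: "'n::finite form \<Rightarrow> 'n form \<Rightarrow> bool" where
  "singular_form u w \<longleftrightarrow>
     (\<forall>f. \<exists>fs :: nat \<Rightarrow> complex ^ 'n.
        (\<lambda>k. quad w (fs k)) \<longlonglongrightarrow> 0 \<and> (\<lambda>k. quad u (f - fs k)) \<longlonglongrightarrow> 0)"

definition M_l :: "'n::finite form \<Rightarrow> 'n form set" where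
  "M_l t = {s1. sesquilinear s1 \<and> nonneg_form s1 \<and>
     (\<exists>s2. sesquilinear s2 \<and> nonneg_form s2 \<and>
        (\<forall>f g. cmod (t f g) \<le> sqrt (quad s1 f) * sqrt (quad s2 g)))}"

definition left_regular :: "'n::finite form \<Rightarrow> 'n form \<Rightarrow> bool" where
  "left_regular t w \<longleftrightarrow> (\<exists>s1\<in>M_l t. abs_continuous s1 w)"

definition left_strongly_singular :: "'n::finite form \<Rightarrow> 'n form \<Rightarrow> bool" where
  "left_strongly_singular t w \<longleftrightarrow> (\<exists>s1\<in>M_l t. singular_form s1 w)"

definition left_bounded :: "'n::finite form \<Rightarrow> 'n form \<Rightarrow> bool" where
  "left_bounded t w \<longleftrightarrow> (\<exists>C::real. C > 0 \<and> (\<lambda>f g. complex_of_real C * w f g) \<in> M_l t)"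

end

theory Submission
  imports Defs
begin


lemma scaleR_vec_eq: "(c::real) *\<^sub>R (f::complex^'n) = complex_of_real c *s f"
  by (simp add: vec_eq_iff) (simp add: scaleR_conv_of_real)

context fixes s :: "'n::finite form" assumes ses: "sesquilinear s"
begin

lemma ses_addL: "s (f + g) h = s f h + s g h" using ses by (simp add: sesquilinear_def)
lemma ses_addR: "s f (g + h) = s f g + s f h" using ses by (simp add: sesquilinear_def)
lemma ses_smultL: "s (a *s f) h = a * s f h" using ses by (simp add: sesquilinear_def)
lemma ses_smultR: "s f (a *s g) = cnj a * s f g" using ses by (simp add: sesquilinear_def)

lemma ses_zeroL: "s 0 g = 0"
  using ses_addL[of 0 0 g] by simp
lemma ses_zeroR: "s f 0 = 0"
  using ses_addR[of f 0 0] by simp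
lemma ses_diffL: "s (f - g) h = s f h - s g h"
  using ses_addL[of "f - g" g h] by simp
lemma ses_diffR: "s f (g - h) = s f g - s f h"
  using ses_addR[of f "g - h" h] by simp
lemma ses_scaleRL: "s (c *\<^sub>R f) h = c *\<^sub>R s f h"
  by (simp add: scaleR_vec_eq ses_smultL scaleR_conv_of_real)
lemma ses_scaleRR: "s f (c *\<^sub>R g) = c *\<^sub>R s f g"
  by (simp add: scaleR_vec_eq ses_smultR scaleR_conv_of_real)

lemma ses_bb: "bounded_bilinear s"
proof -
  have "bilinear s"
    unfolding bilinear_def
    by (auto intro!: linearI simp: ses_addL ses_addR ses_scaleRL ses_scaleRR)
  then show ?thesis using bilinear_conv_bounded_bilinear by blast
qed

lemma ses_bound: "\<exists>B>0. \<forall>f g. cmod (s f g) \<le> B * norm f * norm g"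
proof -
  obtain K where K: "\<forall>a b. norm (s a b) \<le> norm a * norm b * K"
    using bounded_bilinear.bounded[OF ses_bb] by blast
  show ?thesis
  proof (intro exI[of _ "max K 1"] conjI allI)
    fix f g
    have "cmod (s f g) \<le> norm f * norm g * max K 1"
      using K[rule_format, of f g] mult_left_mono[of K "max K 1" "norm f * norm g"] by auto
    then show "cmod (s f g) \<le> max K 1 * norm f * norm g" by (simp add: mult_ac)
  qed simp
qed

lemma ses_kerD: "f \<in> form_ker s \<Longrightarrow> s f g = 0" by (simp add: form_ker_def)

lemma ker_subspace: "subspace (form_ker s)"
  unfolding subspace_def form_ker_def
  by (auto simp: ses_zeroL ses_addL ses_scaleRL)

lemma quad_scaleR: "quad s (r *\<^sub>R f) = r^2 * quad s f"
  by (simp add: quad_def ses_scaleRL ses_scaleRR power2_eq_square)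

end

context fixes s :: "'n::finite form" assumes ses: "sesquilinear s" and nn: "nonneg_form s"
begin

lemma quad_nonneg: "0 \<le> quad s f" using nn by (simp add: nonneg_form_def quad_def)
lemma quad_real: "s f f = complex_of_real (quad s f)"
  using nn unfolding nonneg_form_def quad_def by (metis Reals_cases Re_complex_of_real)

lemma herm: "s f g = cnj (s g f)"
proof -
  have r1: "s (f + g) (f + g) \<in> \<real>" using nn by (simp add: nonneg_form_def)
  have r2: "s (f + \<i> *s g) (f + \<i> *s g) \<in> \<real>" using nn by (simp add: nonneg_form_def)
  have rf: "s f f \<in> \<real>" "s g g \<in> \<real>" using nn by (auto simp: nonneg_form_def)
  have e1: "s (f + g) (f + g) = s f f + s f g + s g f + s g g"
    using ses by (simp add: ses_addL ses_addR)
  have e2: "s (f + \<i> *s g) (f + \<i> *s g) = s f f - \<i> * s f g + \<i> * s g f + s g g"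
    using ses by (simp add: ses_addL ses_addR ses_smultL ses_smultR algebra_simps)
  have "Im (s f g + s g f) = 0"
    using r1 rf e1 by (simp add: complex_is_Real_iff)
  moreover have "Re (s g f) - Re (s f g) = 0"
    using r2 rf e2 by (simp add: complex_is_Real_iff)
  ultimately show ?thesis by (simp add: complex_eq_iff)
qed

lemma quad_add_scaleR: "quad s (z + r *\<^sub>R g) = quad s z + 2 * r * Re (s z g) + r^2 * quad s g"
proof -
  have "s (z + r *\<^sub>R g) (z + r *\<^sub>R g) = s z z + r *\<^sub>R s z g + r *\<^sub>R s g z + (r * r) *\<^sub>R s g g"
    using ses by (simp add: ses_addL ses_addR ses_scaleRL ses_scaleRR)
  moreover have "Re (s g z) = Re (s z g)" using herm[of g z] by simp
  ultimately show ?thesis by (simp add: quad_def power2_eq_square)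
qed

lemma real_aux: fixes x S :: real assumes "S \<ge> 0" "\<forall>r. 0 \<le> 2 * r * x + r^2 * S" shows "x = 0"
proof (rule ccontr)
  assume "x \<noteq> 0"
  define r where "r = - x / (S + 1)"
  have hx: "x = - r * (S + 1)" using assms(1) unfolding r_def by (simp add: field_simps)
  have "r \<noteq> 0" using hx \<open>x \<noteq> 0\<close> by auto
  have "0 \<le> 2 * r * x + r^2 * S" using assms by blast
  also have "2 * r * x + r^2 * S = - (r^2 * (S + 2))"
    by (simp add: hx power2_eq_square algebra_simps)
  also have "\<dots> < 0"
    using assms(1) \<open>r \<noteq> 0\<close> by (simp add: add_nonneg_pos)
  finally show False by simp
qed

lemma quad_zero_ker: assumes "quad s z = 0" shows "z \<in> form_ker s"
proof -
  have re0: "Re (s z g) = 0" for g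
  proof -
    have "\<forall>r. 0 \<le> 2 * r * Re (s z g) + r^2 * quad s g"
      using quad_nonneg[of "z + _ *\<^sub>R g"] by (simp add: quad_add_scaleR assms)
    then show ?thesis using real_aux quad_nonneg by blast
  qed
  show ?thesis unfolding form_ker_def
  proof (intro CollectI allI)
    fix g
    have "Re (s z (\<i> *s g)) = 0" by (rule re0)
    then have "Im (s z g) = 0" using ses by (simp add: ses_smultR)
    then show "s z g = 0" using re0[of g] by (simp add: complex_eq_iff)
  qed
qed


lemma Z_subspace: "subspace {z::complex^'n. \<forall>k\<in>K. inner z k = 0}"
  by (auto simp: subspace_def inner_add_left)

lemma key_bound:
  "\<exists>c>0. \<forall>z\<in>{z. \<forall>k\<in>form_ker s. inner z k = 0}. c * (norm z)^2 \<le> quad s z"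
proof -
  define Z where "Z = {z::complex^'n. \<forall>k\<in>form_ker s. inner z k = 0}"
  have sZ: "subspace Z" unfolding Z_def by (rule Z_subspace)
  define S where "S = Z \<inter> sphere 0 1"
  have cS: "compact S" unfolding S_def
    by (intro closed_Int_compact closed_subspace sZ compact_sphere)
  have scale: "inverse (norm z) *\<^sub>R z \<in> S" if "z \<in> Z" "z \<noteq> 0" for z
    using that sZ unfolding S_def by (auto simp: subspace_scale)
  show ?thesis
  proof (cases "S = {}")
    case True
    then have "z = 0" if "z \<in> Z" for z using scale[OF that] by blast
    have "\<forall>z\<in>Z. 1 * (norm z)^2 \<le> quad s z"
    proof
      fix z assume "z \<in> Z"
      then have "z = 0" by fact
      then show "1 * (norm z)^2 \<le> quad s z" by (simp add: quad_def ses_zeroL[OF ses])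
    qed
    then show ?thesis unfolding Z_def by (intro exI[of _ 1]) auto
  next
    case False
    have cont: "continuous_on S (quad s)"
      unfolding quad_def
      by (intro continuous_intros bounded_bilinear.continuous_on[OF ses_bb[OF ses]])
    obtain x0 where x0: "x0 \<in> S" "\<And>y. y \<in> S \<Longrightarrow> quad s x0 \<le> quad s y"
      using continuous_attains_inf[OF cS False cont] by blast
    have cpos: "quad s x0 > 0"
    proof (rule ccontr)
      assume "\<not> quad s x0 > 0"
      then have "quad s x0 = 0" using quad_nonneg[of x0] by linarith
      then have "x0 \<in> form_ker s" by (rule quad_zero_ker)
      moreover have "x0 \<in> Z" "norm x0 = 1" using x0(1) by (auto simp: S_def)
      ultimately have "inner x0 x0 = 0" unfolding Z_def by blast
      then show False using \<open>norm x0 = 1\<close> by simp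
    qed
    have "quad s x0 * (norm z)^2 \<le> quad s z" if "z \<in> Z" for z
    proof (cases "z = 0")
      case True then show ?thesis by (simp add: quad_nonneg)
    next
      case False
      have "quad s x0 \<le> quad s (inverse (norm z) *\<^sub>R z)" using x0(2) scale[OF that False] by blast
      also have "\<dots> = (inverse (norm z))^2 * quad s z" by (rule quad_scaleR[OF ses])
      finally show ?thesis using False by (simp add: field_simps)
    qed
    then show ?thesis using cpos unfolding Z_def by blast
  qed
qed

lemma lemmaA: "\<exists>c>0. \<exists>P. \<forall>f. P f \<in> form_ker s \<and> c * (norm (f - P f))^2 \<le> quad s f"
proof -
  define Z where "Z = {z::complex^'n. \<forall>k\<in>form_ker s. inner z k = 0}"
  obtain c where c: "c > 0" "\<And>z. z \<in> Z \<Longrightarrow> c * (norm z)^2 \<le> quad s z"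
    using key_bound unfolding Z_def by blast
  have dec: "\<exists>y. y \<in> form_ker s \<and> c * (norm (f - y))^2 \<le> quad s f" for f
  proof -
    obtain y z where yz: "y \<in> span (form_ker s)" "\<And>w. w \<in> span (form_ker s) \<Longrightarrow> orthogonal z w" "f = y + z"
      using orthogonal_subspace_decomp_exists by blast
    have sp: "span (form_ker s) = form_ker s" using ker_subspace[OF ses] by (simp add: span_eq_iff)
    have y: "y \<in> form_ker s" using yz(1) sp by simp
    have z: "z \<in> Z" using yz(2) sp unfolding Z_def orthogonal_def by auto
    have "s z y = 0" using herm[of z y] ses_kerD[OF ses y] by simp
    then have "quad s f = quad s z" using ses_kerD[OF ses y] by (simp add: yz(3) quad_def ses_addL[OF ses] ses_addR[OF ses])
    then show ?thesis using y c(2)[OF z] yz(3) by (intro exI[of _ y]) auto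
  qed
  then show ?thesis using c(1) by metis
qed

end


definition ip :: "'n::finite form" where
  "ip f g = (\<Sum>j\<in>UNIV. f$j * cnj (g$j))"

lemma ip_ses: "sesquilinear ip"
  unfolding sesquilinear_def ip_def
  by (simp add: sum.distrib sum_distrib_left algebra_simps)

lemma ip_self: "ip f f = complex_of_real ((norm f)^2)"
proof -
  have "ip f f = (\<Sum>j\<in>UNIV. complex_of_real ((norm (f$j))^2))"
    unfolding ip_def by (simp only: complex_norm_square)
  also have "\<dots> = complex_of_real (\<Sum>j\<in>UNIV. (norm (f$j))^2)" by simp
  also have "(\<Sum>j\<in>UNIV. (norm (f$j))^2) = (norm f)^2"
    unfolding norm_vec_def L2_set_def by (simp add: sum_nonneg)
  finally show ?thesis .
qed

lemma ip_nonneg: "nonneg_form ip"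
  unfolding nonneg_form_def by (simp add: ip_self)

lemma quad_ip: "quad ip g = (norm g)^2"
  by (simp add: quad_def ip_self)

lemma sqrt_quad_ip: "sqrt (quad ip g) = norm g"
  by (simp add: quad_ip)

lemma ses_sumR: assumes "sesquilinear s" shows "s f (sum h A) = (\<Sum>j\<in>A. s f (h j))"
proof (induction A rule: infinite_finite_induct)
  case (infinite A) then show ?case by (simp add: ses_zeroR[OF assms])
next
  case empty then show ?case by (simp add: ses_zeroR[OF assms])
next
  case (insert x F) then show ?case by (simp add: ses_addR[OF assms])
qed

lemma ses_expand: assumes "sesquilinear s"
  shows "s f g = (\<Sum>j\<in>UNIV. cnj (g$j) * s f (axis j 1))"
proof -
  have "s f g = s f (\<Sum>j\<in>UNIV. (g$j) *s axis j 1)" by (simp add: basis_expansion)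
  also have "\<dots> = (\<Sum>j\<in>UNIV. cnj (g$j) * s f (axis j 1))"
    by (simp add: ses_sumR[OF assms] ses_smultR[OF assms])
  finally show ?thesis .
qed



lemma M_l_ker: assumes "s1 \<in> M_l t" "k \<in> form_ker s1" shows "k \<in> form_ker t"
proof -
  obtain s2 where b: "\<forall>f g. cmod (t f g) \<le> sqrt (quad s1 f) * sqrt (quad s2 g)"
    using assms(1) unfolding M_l_def by blast
  have "quad s1 k = 0" using assms(2) by (simp add: form_ker_def quad_def)
  then have "cmod (t k g) \<le> 0" for g using b by (metis mult_zero_left real_sqrt_zero)
  then show ?thesis by (simp add: form_ker_def)
qed

lemma LB_imp_LR: assumes "left_bounded t w" shows "left_regular t w"
proof -
  obtain C where C: "C > 0" "(\<lambda>f g. complex_of_real C * w f g) \<in> M_l t"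
    using assms unfolding left_bounded_def by blast
  have "abs_continuous (\<lambda>f g. complex_of_real C * w f g) w"
    unfolding abs_continuous_def
  proof (intro allI impI)
    fix fs :: "nat \<Rightarrow> complex^'a"
    assume "(\<lambda>k. quad w (fs k)) \<longlonglongrightarrow> 0"
    then have "(\<lambda>k. C * quad w (fs k)) \<longlonglongrightarrow> 0" by (rule tendsto_mult_right_zero)
    then show "(\<lambda>k. quad (\<lambda>f g. complex_of_real C * w f g) (fs k)) \<longlonglongrightarrow> 0"
      by (simp add: quad_def)
  qed
  then show ?thesis using C(2) unfolding left_regular_def by blast
qed

lemma LR_imp_ker: assumes "left_regular t w" shows "form_ker w \<subseteq> form_ker t"
proof
  fix f assume f: "f \<in> form_ker w"
  obtain s1 where s1: "s1 \<in> M_l t" "abs_continuous s1 w"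
    using assms unfolding left_regular_def by blast
  have ses1: "sesquilinear s1" using s1(1) by (simp add: M_l_def)
  have a1: "(\<lambda>k. quad w f) \<longlonglongrightarrow> 0" using f by (simp add: form_ker_def quad_def)
  have a2: "\<And>e. e > 0 \<Longrightarrow> \<exists>N. \<forall>m\<ge>N. \<forall>k\<ge>N. quad s1 (f - f) < e"
    by (simp add: quad_def ses_zeroL[OF ses1])
  have "(\<lambda>k. quad s1 f) \<longlonglongrightarrow> 0"
    using s1(2)[unfolded abs_continuous_def, rule_format, of "\<lambda>_. f", OF a1 a2] by simp
  then have "quad s1 f = 0" by (simp add: LIMSEQ_const_iff)
  moreover have "nonneg_form s1" using s1(1) by (simp add: M_l_def)
  ultimately have "f \<in> form_ker s1" using quad_zero_ker ses1 by blast
  then show "f \<in> form_ker t" using M_l_ker s1(1) by blast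
qed

lemma ker_imp_LB:
  assumes st: "sesquilinear t" and sw: "sesquilinear w" and nw: "nonneg_form w"
    and kk: "form_ker w \<subseteq> form_ker t"
  shows "left_bounded t w"
proof -
  obtain B where B: "B > 0" "\<And>f g. cmod (t f g) \<le> B * norm f * norm g"
    using ses_bound[OF st] by blast
  obtain c P where cP: "c > 0" "\<And>f. P f \<in> form_ker w" "\<And>f. c * (norm (f - P f))^2 \<le> quad w f"
    using lemmaA[OF sw nw] by blast
  define C where "C = B^2 / c"
  have Cpos: "C > 0" using B cP by (simp add: C_def)
  let ?s1 = "\<lambda>f g. complex_of_real C * w f g"
  have q1: "quad ?s1 f = C * quad w f" for f by (simp add: quad_def)
  have ses1: "sesquilinear ?s1" using sw by (simp add: sesquilinear_def algebra_simps)
  have nn1: "nonneg_form ?s1" using nw Cpos by (simp add: nonneg_form_def)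
  have bnd: "cmod (t f g) \<le> sqrt (quad ?s1 f) * sqrt (quad ip g)" for f g
  proof -
    have "t (P f) g = 0" using kk cP(2)[of f] by (auto simp: form_ker_def)
    then have "t f g = t (f - P f) g" by (simp add: ses_diffL[OF st])
    then have "cmod (t f g) \<le> B * norm (f - P f) * norm g" using B(2) by simp
    also have "norm (f - P f) \<le> sqrt (quad w f / c)"
      using cP(1) cP(3)[of f] by (intro real_le_rsqrt) (simp add: field_simps)
    then have "B * norm (f - P f) * norm g \<le> B * sqrt (quad w f / c) * norm g"
      using B(1) by (simp add: mult_right_mono)
    also have "B * sqrt (quad w f / c) = sqrt (quad ?s1 f)"
      using B(1) cP(1) by (simp only: q1) (simp add: C_def real_sqrt_mult real_sqrt_divide)
    finally show ?thesis by (simp add: sqrt_quad_ip)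
  qed
  have "?s1 \<in> M_l t" unfolding M_l_def using ses1 nn1 ip_ses ip_nonneg bnd by blast
  then show ?thesis unfolding left_bounded_def using Cpos by blast
qed



lemma LSS_imp_sum:
  assumes st: "sesquilinear t" and sw: "sesquilinear w" and nw: "nonneg_form w"
    and lss: "left_strongly_singular t w"
  shows "{a + b |a b. a \<in> form_ker w \<and> b \<in> form_ker t} = UNIV"
proof -
  define KT where "KT = {a + b |a b. a \<in> form_ker w \<and> b \<in> form_ker t}"
  obtain s1 where s1: "s1 \<in> M_l t" "singular_form s1 w"
    using lss unfolding left_strongly_singular_def by blast
  have ses1: "sesquilinear s1" and nn1: "nonneg_form s1" using s1(1) by (auto simp: M_l_def)
  obtain c1 P1 where cP1: "c1 > 0" "\<And>f. P1 f \<in> form_ker w" "\<And>f. c1 * (norm (f - P1 f))^2 \<le> quad w f"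
    using lemmaA[OF sw nw] by blast
  obtain c2 P2 where cP2: "c2 > 0" "\<And>f. P2 f \<in> form_ker s1" "\<And>f. c2 * (norm (f - P2 f))^2 \<le> quad s1 f"
    using lemmaA[OF ses1 nn1] by blast
  have "subspace KT" unfolding KT_def
    by (intro subspace_sums ker_subspace sw st)
  then have cl: "closed KT" by (rule closed_subspace)
  have "f \<in> KT" for f
  proof -
    obtain fs where h1: "(\<lambda>k. quad w (fs k)) \<longlonglongrightarrow> 0" and h2: "(\<lambda>k. quad s1 (f - fs k)) \<longlonglongrightarrow> 0"
      using s1(2) unfolding singular_form_def by blast
    define a where "a k = P1 (fs k)" for k
    define b where "b k = P2 (f - fs k)" for k
    have mem: "a k + b k \<in> KT" for k
      unfolding KT_def a_def b_def using cP1(2) M_l_ker[OF s1(1) cP2(2)] by blast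
    have n1: "norm (fs k - a k) \<le> sqrt (quad w (fs k) / c1)" for k
      using cP1(1) cP1(3)[of "fs k"] unfolding a_def by (intro real_le_rsqrt) (simp add: field_simps)
    have n2: "norm (f - fs k - b k) \<le> sqrt (quad s1 (f - fs k) / c2)" for k
      using cP2(1) cP2(3)[of "f - fs k"] unfolding b_def by (intro real_le_rsqrt) (simp add: field_simps)
    have nb: "norm (a k + b k - f) \<le> sqrt (quad w (fs k) / c1) + sqrt (quad s1 (f - fs k) / c2)" for k
    proof -
      have "a k + b k - f = - ((f - fs k - b k) + (fs k - a k))" by (simp add: algebra_simps)
      then have "norm (a k + b k - f) = norm ((f - fs k - b k) + (fs k - a k))"
        by (metis norm_minus_cancel)
      also have "\<dots> \<le> norm (f - fs k - b k) + norm (fs k - a k)" by (rule norm_triangle_ineq)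
      finally show ?thesis using n1[of k] n2[of k] by linarith
    qed
    have lim0: "(\<lambda>k. sqrt (quad w (fs k) / c1) + sqrt (quad s1 (f - fs k) / c2)) \<longlonglongrightarrow> 0"
      using tendsto_add[OF tendsto_real_sqrt[OF tendsto_divide_zero[OF h1]]
                             tendsto_real_sqrt[OF tendsto_divide_zero[OF h2]]] by simp
    have "(\<lambda>k. a k + b k - f) \<longlonglongrightarrow> 0"
      by (rule Lim_null_comparison[OF _ lim0]) (simp add: nb)
    then have lim: "(\<lambda>k. a k + b k) \<longlonglongrightarrow> f" by (rule LIM_zero_cancel)
    show ?thesis by (rule closed_sequentially[OF cl _ lim]) (rule mem)
  qed
  then show ?thesis unfolding KT_def by blast
qed

lemma sum_imp_LSS:
  assumes st: "sesquilinear t" and sw: "sesquilinear w"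
    and sum: "{a + b |a b. a \<in> form_ker w \<and> b \<in> form_ker t} = UNIV"
  shows "left_strongly_singular t w"
proof -
  define L where "L f = (\<chi> j. t f (axis j 1))" for f :: "complex^'a"
  define \<rho> where "\<rho> f g = ip (L f) (L g)" for f g
  have Ladd: "L (f + g) = L f + L g" for f g by (simp add: vec_eq_iff L_def ses_addL[OF st])
  have Lsm: "L (a *s f) = a *s L f" for a f by (simp add: vec_eq_iff L_def ses_smultL[OF st])
  have ses\<rho>: "sesquilinear \<rho>"
    unfolding sesquilinear_def \<rho>_def
    by (simp add: Ladd Lsm ses_addL[OF ip_ses] ses_addR[OF ip_ses] ses_smultL[OF ip_ses] ses_smultR[OF ip_ses])
  have nn\<rho>: "nonneg_form \<rho>" unfolding nonneg_form_def \<rho>_def by (simp add: ip_self)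
  have q\<rho>: "quad \<rho> f = (norm (L f))^2" for f by (simp add: \<rho>_def quad_ip[unfolded quad_def] quad_def)
  have bnd: "cmod (t f g) \<le> sqrt (quad \<rho> f) * sqrt (quad ip g)" for f g
  proof -
    have "t f g = (\<Sum>j\<in>UNIV. cnj (g$j) * (L f)$j)" by (subst ses_expand[OF st]) (simp add: L_def)
    then have "cmod (t f g) \<le> (\<Sum>j\<in>UNIV. cmod (cnj (g$j) * (L f)$j))" by (simp add: norm_sum)
    also have "\<dots> = (\<Sum>j\<in>UNIV. \<bar>cmod (g$j)\<bar> * \<bar>cmod ((L f)$j)\<bar>)" by (simp add: norm_mult)
    also have "\<dots> \<le> L2_set (\<lambda>j. cmod (g$j)) UNIV * L2_set (\<lambda>j. cmod ((L f)$j)) UNIV"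
      by (rule L2_set_mult_ineq)
    also have "\<dots> = norm g * norm (L f)" by (simp add: norm_vec_def)
    finally show ?thesis by (simp add: q\<rho> sqrt_quad_ip mult.commute)
  qed
  have M: "\<rho> \<in> M_l t" unfolding M_l_def using ses\<rho> nn\<rho> ip_ses ip_nonneg bnd by blast
  have "singular_form \<rho> w" unfolding singular_form_def
  proof
    fix f :: "complex^'a"
    obtain a b where ab: "f = a + b" "a \<in> form_ker w" "b \<in> form_ker t"
    proof -
      have "f \<in> {a + b |a b. a \<in> form_ker w \<and> b \<in> form_ker t}" using sum by simp
      then show ?thesis using that by blast
    qed
    have "L b = 0" using ab(3) by (simp add: vec_eq_iff L_def form_ker_def)
    then have "quad \<rho> (f - a) = 0" using ab(1) by (simp add: q\<rho>)
    moreover have "quad w a = 0" using ab(2) by (simp add: quad_def form_ker_def)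
    ultimately show "\<exists>fs. (\<lambda>k. quad w (fs k)) \<longlonglongrightarrow> 0 \<and> (\<lambda>k. quad \<rho> (f - fs k)) \<longlonglongrightarrow> 0"
      by (intro exI[of _ "\<lambda>_. a"]) simp
  qed
  then show ?thesis unfolding left_strongly_singular_def using M by blast
qed

theorem mainTheorem3:
  fixes t w :: "'n::finite form"
  assumes "sesquilinear t" and "sesquilinear w" and "nonneg_form w"
  shows "(left_bounded t w \<longleftrightarrow> left_regular t w) \<and>
         (left_regular t w \<longleftrightarrow> form_ker w \<subseteq> form_ker t) \<and>
         (left_strongly_singular t w \<longleftrightarrow>
            {a + b | a b. a \<in> form_ker w \<and> b \<in> form_ker t} = UNIV)"
proof (intro conjI iffI)
  show "left_regular t w" if "left_bounded t w" using that by (rule LB_imp_LR)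
  show "left_bounded t w" if "left_regular t w"
    by (rule ker_imp_LB[OF assms LR_imp_ker[OF that]])
  show "form_ker w \<subseteq> form_ker t" if "left_regular t w" using that by (rule LR_imp_ker)
  show "left_regular t w" if "form_ker w \<subseteq> form_ker t"
    by (rule LB_imp_LR[OF ker_imp_LB[OF assms that]])
  show "{a + b | a b. a \<in> form_ker w \<and> b \<in> form_ker t} = UNIV" if "left_strongly_singular t w"
    by (rule LSS_imp_sum[OF assms that])
  show "left_strongly_singular t w" if "{a + b | a b. a \<in> form_ker w \<and> b \<in> form_ker t} = UNIV"
    by (rule sum_imp_LSS[OF assms(1,2) that])
qed


end
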